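(* Let $N\ge1$ and let $\mathbf X=(X_t)_{t\in I}$ be a real Markov process that is $N$-TLI and $N$-MSC. Then $\mathbf X$ is $N$-MPR if and only if there exist $N$ martingales $(\mathcal M_i(t),\mathcal F_{\le t})_{t\in I}$, $i=1,\dots,N$, such that each $\mathcal M_i(t)$ is a polynomial in $X_t$ of degree $i$ (with coefficients depending on $t$). More precisely: if $\mathbf X$ is $N$-MPR with structural matrix $V_N(t)$, then the entries of the vector $V_N^{-1}(t)X_t^{(N)}$ are polynomial martingales with respect to $(\mathcal F_{\le t})$; conversely, if $W_N(t)$ is a non-singular lower triangular matrix such that the entries of $W_N(t)X_t^{(N)}$ are martingales with respect to $(\mathcal F_{\le t})$, then $E(X_t^{(N)}\mid\mathcal F_{\le s})=W_N^{-1}(t)W_N(s)X_s^{(N)}$ for $s\le t$, so $\mathbf X$ is $N$-MPR and $V_N(t)=W_N^{-1}(t)$ is a structural matrix of $\mathbf X$.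
   Context: $I=[l,r]$ is a finite or infinite segment of the real line. $\mathbf X$ has $E|X_t|^n<\infty$ for all $n$, $t$, and the support of the law of each $X_t$ is infinite. $\mathcal F_{\le s}=\sigma(X_v:v\in[l,s])$. $N$-TLI: for every $0<n\le N$ and $s\ne t$ in $I$, $[\operatorname{cov}(X_t^i,X_s^j)]_{i,j=1}^n$ is non-singular. $N$-MSC: $(t,s)\mapsto EX_t^mX_s^j$ is continuous at least on the diagonal for $m,j\le N$. $N$-MPR: Markov, $N$-TLI, $N$-MSC, and for $1\le n\le N$, $s\le t$, $E(X_t^n\mid\mathcal F_{\le s})=\sum_{k=0}^n\gamma_{n,k}(s,t)X_s^k$ a.s.; with $\gamma_{0,0}=1$, $\gamma_{i,j}=0$ for $j>i$, set $\mathcal A_N(s,t)=[\gamma_{i,j}(s,t)]_{i,j=0}^N$, so $E(X_t^{(N)}\mid\mathcal F_{\le s})=\mathcal A_N(s,t)X_s^{(N)}$ with $X_t^{(N)}=(1,X_t,\dots,X_t^N)^T$. A structural matrix of an $N$-MPR process is any family $\{V_N(t)\}_{t\in I}$ of non-singular lower triangular $(N+1)\times(N+1)$ matrices with $\mathcal A_N(s,u)=V_N(u)V_N^{-1}(s)$ for all $s\le u$. *)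

theory Defs
  imports "HOL-Probability.Probability" "Jordan_Normal_Form.Gauss_Jordan_Elimination"
    "Jordan_Normal_Form.Determinant"
begin

definition gen_sigma :: "'a measure \<Rightarrow> (real \<Rightarrow> 'a \<Rightarrow> real) \<Rightarrow> real set \<Rightarrow> 'a measure" where
  "gen_sigma M X J = sigma (space M) {X v -` A \<inter> space M | v A. v \<in> J \<and> A \<in> sets borel}"

definition past :: "'a measure \<Rightarrow> real set \<Rightarrow> (real \<Rightarrow> 'a \<Rightarrow> real) \<Rightarrow> real \<Rightarrow> 'a measure" where
  "past M I X s = gen_sigma M X {v \<in> I. v \<le> s}"

definition law_support :: "'a measure \<Rightarrow> (real \<Rightarrow> 'a \<Rightarrow> real) \<Rightarrow> real \<Rightarrow> real set" where
  "law_support M X t = {x. \<forall>e>0. measure M {\<omega> \<in> space M. \<bar>X t \<omega> - x\<bar> < e} > 0}"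

definition standing :: "'a measure \<Rightarrow> real set \<Rightarrow> (real \<Rightarrow> 'a \<Rightarrow> real) \<Rightarrow> bool" where
  "standing M I X \<longleftrightarrow> prob_space M \<and> is_interval I \<and>
     (\<forall>t\<in>I. X t \<in> borel_measurable M) \<and>
     (\<forall>t\<in>I. \<forall>n::nat. integrable M (\<lambda>\<omega>. \<bar>X t \<omega>\<bar> ^ n)) \<and>
     (\<forall>t\<in>I. infinite (law_support M X t))"

definition markov :: "'a measure \<Rightarrow> real set \<Rightarrow> (real \<Rightarrow> 'a \<Rightarrow> real) \<Rightarrow> bool" where
  "markov M I X \<longleftrightarrow> (\<forall>s\<in>I. \<forall>t\<in>I. s \<le> t \<longrightarrow> (\<forall>A \<in> sets borel.
     AE \<omega> in M. real_cond_exp M (past M I X s) (\<lambda>\<omega>. indicator A (X t \<omega>)) \<omega>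
               = real_cond_exp M (gen_sigma M X {s}) (\<lambda>\<omega>. indicator A (X t \<omega>)) \<omega>))"

definition cov :: "'a measure \<Rightarrow> ('a \<Rightarrow> real) \<Rightarrow> ('a \<Rightarrow> real) \<Rightarrow> real" where
  "cov M f g = integral\<^sup>L M (\<lambda>\<omega>. f \<omega> * g \<omega>) - integral\<^sup>L M f * integral\<^sup>L M g"

definition TLI :: "nat \<Rightarrow> 'a measure \<Rightarrow> real set \<Rightarrow> (real \<Rightarrow> 'a \<Rightarrow> real) \<Rightarrow> bool" where
  "TLI N M I X \<longleftrightarrow> (\<forall>n. 0 < n \<and> n \<le> N \<longrightarrow> (\<forall>s\<in>I. \<forall>t\<in>I. s \<noteq> t \<longrightarrow>
     det (mat n n (\<lambda>(i,j). cov M (\<lambda>\<omega>. X t \<omega> ^ (i+1)) (\<lambda>\<omega>. X s \<omega> ^ (j+1)))) \<noteq> 0))"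

definition MSC :: "nat \<Rightarrow> 'a measure \<Rightarrow> real set \<Rightarrow> (real \<Rightarrow> 'a \<Rightarrow> real) \<Rightarrow> bool" where
  "MSC N M I X \<longleftrightarrow> (\<forall>m\<le>N. \<forall>j\<le>N. \<forall>t\<in>I.
     continuous (at (t,t) within I \<times> I)
       (\<lambda>(u,v). integral\<^sup>L M (\<lambda>\<omega>. X u \<omega> ^ m * X v \<omega> ^ j)))"

definition poly_reg :: "nat \<Rightarrow> 'a measure \<Rightarrow> real set \<Rightarrow> (real \<Rightarrow> 'a \<Rightarrow> real)
    \<Rightarrow> (nat \<Rightarrow> nat \<Rightarrow> real \<Rightarrow> real \<Rightarrow> real) \<Rightarrow> bool" where
  "poly_reg N M I X \<gamma> \<longleftrightarrow> (\<forall>n. 1 \<le> n \<and> n \<le> N \<longrightarrow> (\<forall>s\<in>I. \<forall>t\<in>I. s \<le> t \<longrightarrow>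
     (AE \<omega> in M. real_cond_exp M (past M I X s) (\<lambda>\<omega>. X t \<omega> ^ n) \<omega>
                 = (\<Sum>k\<le>n. \<gamma> n k s t * X s \<omega> ^ k))))"

definition MPR :: "nat \<Rightarrow> 'a measure \<Rightarrow> real set \<Rightarrow> (real \<Rightarrow> 'a \<Rightarrow> real) \<Rightarrow> bool" where
  "MPR N M I X \<longleftrightarrow> markov M I X \<and> TLI N M I X \<and> MSC N M I X \<and> (\<exists>\<gamma>. poly_reg N M I X \<gamma>)"

definition A_mat :: "nat \<Rightarrow> (nat \<Rightarrow> nat \<Rightarrow> real \<Rightarrow> real \<Rightarrow> real) \<Rightarrow> real \<Rightarrow> real \<Rightarrow> real mat" where
  "A_mat N \<gamma> s t = mat (N+1) (N+1) (\<lambda>(i,j).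
     if i = 0 then (if j = 0 then 1 else 0) else if i < j then 0 else \<gamma> i j s t)"

definition lower_tri :: "real mat \<Rightarrow> bool" where
  "lower_tri A \<longleftrightarrow> (\<forall>i<dim_row A. \<forall>j<dim_col A. i < j \<longrightarrow> A $$ (i,j) = 0)"

definition minv :: "real mat \<Rightarrow> real mat" where
  "minv A = the (mat_inverse A)"

definition nonsing_lt_family :: "nat \<Rightarrow> real set \<Rightarrow> (real \<Rightarrow> real mat) \<Rightarrow> bool" where
  "nonsing_lt_family N I V \<longleftrightarrow> (\<forall>t\<in>I. V t \<in> carrier_mat (N+1) (N+1) \<and> lower_tri (V t) \<and> det (V t) \<noteq> 0)"

definition structural_matrix :: "nat \<Rightarrow> 'a measure \<Rightarrow> real set \<Rightarrow> (real \<Rightarrow> 'a \<Rightarrow> real)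
    \<Rightarrow> (real \<Rightarrow> real mat) \<Rightarrow> bool" where
  "structural_matrix N M I X V \<longleftrightarrow> nonsing_lt_family N I V \<and>
     (\<exists>\<gamma>. poly_reg N M I X \<gamma> \<and>
        (\<forall>s\<in>I. \<forall>u\<in>I. s \<le> u \<longrightarrow> A_mat N \<gamma> s u = V u * minv (V s)))"

definition Xvec :: "nat \<Rightarrow> (real \<Rightarrow> 'a \<Rightarrow> real) \<Rightarrow> real \<Rightarrow> 'a \<Rightarrow> real vec" where
  "Xvec N X t \<omega> = vec (N+1) (\<lambda>k. X t \<omega> ^ k)"

definition martingale :: "'a measure \<Rightarrow> real set \<Rightarrow> (real \<Rightarrow> 'a \<Rightarrow> real) \<Rightarrow> (real \<Rightarrow> 'a \<Rightarrow> real) \<Rightarrow> bool" where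
  "martingale M I X Y \<longleftrightarrow>
     (\<forall>t\<in>I. integrable M (Y t) \<and> Y t \<in> borel_measurable (past M I X t)) \<and>
     (\<forall>s\<in>I. \<forall>t\<in>I. s \<le> t \<longrightarrow> (AE \<omega> in M. real_cond_exp M (past M I X s) (Y t) \<omega> = Y s \<omega>))"

end

theory Submission
  imports Defs
begin

lemma minv_props:
  fixes A :: "real mat"
  assumes A: "A \<in> carrier_mat n n" and d: "det A \<noteq> 0"
  shows "minv A \<in> carrier_mat n n" "A * minv A = 1\<^sub>m n" "minv A * A = 1\<^sub>m n"
proof -
  have "mat_inverse A \<noteq> None" using det_non_zero_imp_unit[OF A d, of "()"] mat_inverse(1)[OF A, of "()"] by blast
  then obtain B where B: "mat_inverse A = Some B" by auto
  then have "minv A = B" unfolding minv_def by simp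
  with mat_inverse(2)[OF A B] show "minv A \<in> carrier_mat n n" "A * minv A = 1\<^sub>m n" "minv A * A = 1\<^sub>m n"
    by auto
qed

lemma minv_det:
  fixes A :: "real mat"
  assumes A: "A \<in> carrier_mat n n" and d: "det A \<noteq> 0"
  shows "det (minv A) \<noteq> 0"
proof -
  have "det (A * minv A) = det A * det (minv A)" using det_mult[OF A minv_props(1)[OF A d]] .
  then show ?thesis using minv_props(2)[OF A d] by auto
qed

lemma minv_unique:
  fixes A B :: "real mat"
  assumes A: "A \<in> carrier_mat n n" and d: "det A \<noteq> 0" and B: "B \<in> carrier_mat n n"
    and AB: "B * A = 1\<^sub>m n"
  shows "minv A = B"
proof -
  have "B = B * (A * minv A)" using minv_props(2)[OF A d] B by simp
  also have "\<dots> = (B * A) * minv A" using A B minv_props(1)[OF A d] by (simp add: assoc_mult_mat)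
  also have "\<dots> = minv A" using AB minv_props(1)[OF A d] by simp
  finally show ?thesis by simp
qed

lemma minv_minv:
  fixes A :: "real mat"
  assumes A: "A \<in> carrier_mat n n" and d: "det A \<noteq> 0"
  shows "minv (minv A) = A"
  by (rule minv_unique[OF minv_props(1)[OF A d] minv_det[OF A d] A minv_props(2)[OF A d]])

lemma lower_tri_det:
  fixes A :: "real mat"
  assumes A: "A \<in> carrier_mat n n" and L: "lower_tri A"
  shows "det A = (\<Prod>i<n. A $$ (i,i))"
proof -
  have "det A = prod_list (diag_mat A)"
    by (rule det_lower_triangular[OF _ A]) (use L A in \<open>auto simp: lower_tri_def\<close>)
  also have "\<dots> = (\<Prod>i<n. A $$ (i,i))" using A by (simp add: prod_list_diag_prod atLeast0LessThan)
  finally show ?thesis .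
qed

lemma lower_tri_diag_nz:
  fixes A :: "real mat"
  assumes A: "A \<in> carrier_mat n n" and L: "lower_tri A" and d: "det A \<noteq> 0" and i: "i < n"
  shows "A $$ (i,i) \<noteq> 0"
  using d lower_tri_det[OF A L] i by auto

lemma lower_tri_mult:
  fixes A B :: "real mat"
  assumes A: "A \<in> carrier_mat n n" and B: "B \<in> carrier_mat n n" and LA: "lower_tri A" and LB: "lower_tri B"
  shows "lower_tri (A * B)"
  unfolding lower_tri_def
proof (intro allI impI)
  fix i j assume i: "i < dim_row (A * B)" and j: "j < dim_col (A * B)" and ij: "i < j"
  have "(A * B) $$ (i,j) = (\<Sum>k<n. A $$ (i,k) * B $$ (k,j))"
    using A B i j by (simp add: scalar_prod_def atLeast0LessThan)
  also have "\<dots> = 0"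
  proof (rule sum.neutral, intro ballI)
    fix k assume k: "k \<in> {..<n}"
    show "A $$ (i,k) * B $$ (k,j) = 0"
    proof (cases "i < k")
      case True then show ?thesis using LA A i k by (auto simp: lower_tri_def)
    next
      case False then have "k < j" using ij by simp
      then show ?thesis using LB B j k by (auto simp: lower_tri_def)
    qed
  qed
  finally show "(A * B) $$ (i,j) = 0" .
qed

lemma lower_tri_minv:
  fixes A :: "real mat"
  assumes A: "A \<in> carrier_mat n n" and L: "lower_tri A" and d: "det A \<noteq> 0"
  shows "lower_tri (minv A)"
proof -
  let ?B = "minv A"
  have B: "?B \<in> carrier_mat n n" and AB: "A * ?B = 1\<^sub>m n" using minv_props[OF A d] by auto
  have main: "\<forall>j. i < j \<longrightarrow> j < n \<longrightarrow> ?B $$ (i,j) = 0" for i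
  proof (induction i rule: less_induct)
    case (less i)
    show ?case
    proof (intro allI impI)
      fix j assume ij: "i < j" and jn: "j < n"
      have "0 = (A * ?B) $$ (i,j)" using AB ij jn by simp
      also have "\<dots> = (\<Sum>k<n. A $$ (i,k) * ?B $$ (k,j))"
        using A B ij jn by (simp add: scalar_prod_def atLeast0LessThan)
      also have "\<dots> = (\<Sum>k\<in>{i}. A $$ (i,k) * ?B $$ (k,j))"
      proof (rule sum.mono_neutral_right)
        show "\<forall>k\<in>{..<n} - {i}. A $$ (i,k) * ?B $$ (k,j) = 0"
        proof
          fix k assume k: "k \<in> {..<n} - {i}"
          show "A $$ (i,k) * ?B $$ (k,j) = 0"
          proof (cases "i < k")
            case True then show ?thesis using L A k ij jn by (auto simp: lower_tri_def)
          next
            case False then have "k < i" using k by auto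
            then show ?thesis using less[of k] k ij jn by auto
          qed
        qed
      qed (use ij jn in auto)
      also have "\<dots> = A $$ (i,i) * ?B $$ (i,j)" by simp
      finally have "A $$ (i,i) * ?B $$ (i,j) = 0" by simp
      moreover have "A $$ (i,i) \<noteq> 0" using lower_tri_diag_nz[OF A L d] ij jn by simp
      ultimately show "?B $$ (i,j) = 0" by simp
    qed
  qed
  show ?thesis unfolding lower_tri_def using main B by auto
qed

lemma std_prob: "standing M I X \<Longrightarrow> prob_space M" by (simp add: standing_def)
lemma std_meas: "standing M I X \<Longrightarrow> t \<in> I \<Longrightarrow> X t \<in> borel_measurable M" by (simp add: standing_def)

lemma gen_sigma_gen_sub:
  "{X v -` A \<inter> space M | v A. v \<in> J \<and> A \<in> sets borel} \<subseteq> Pow (space M)" by auto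

lemma space_gen_sigma[simp]: "space (gen_sigma M X J) = space M"
  unfolding gen_sigma_def by (rule space_measure_of[OF gen_sigma_gen_sub])

lemma sets_gen_sigma: "sets (gen_sigma M X J) = sigma_sets (space M) {X v -` A \<inter> space M | v A. v \<in> J \<and> A \<in> sets borel}"
  unfolding gen_sigma_def by (rule sets_measure_of[OF gen_sigma_gen_sub])

lemma gen_sigma_subalg:
  assumes "standing M I X" "J \<subseteq> I"
  shows "subalgebra M (gen_sigma M X J)"
  unfolding subalgebra_def
proof
  show "sets (gen_sigma M X J) \<subseteq> sets M" unfolding sets_gen_sigma
    by (rule sets.sigma_sets_subset) (use assms std_meas[OF assms(1)] in \<open>blast intro!: measurable_sets\<close>)
qed simp

lemma meas_gen:
  assumes "v \<in> J"
  shows "X v \<in> borel_measurable (gen_sigma M X J)"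
proof (rule measurableI)
  fix A :: "real set" assume "A \<in> sets borel"
  then have "X v -` A \<inter> space M \<in> {X v -` A \<inter> space M | v A. v \<in> J \<and> A \<in> sets borel}" using assms by blast
  then show "X v -` A \<inter> space (gen_sigma M X J) \<in> sets (gen_sigma M X J)"
    unfolding sets_gen_sigma by auto
qed simp

lemma past_subalg: "standing M I X \<Longrightarrow> subalgebra M (past M I X s)"
  unfolding past_def by (rule gen_sigma_subalg) auto

lemma past_sfs: "standing M I X \<Longrightarrow> sigma_finite_subalgebra M (past M I X s)"
  apply (rule finite_measure_subalgebra_is_sigma_finite)
  apply (simp add: finite_measure_subalgebra_def finite_measure_subalgebra_axioms_def past_subalg)
  using std_prob prob_space.finite_measure by blast

lemma meas_past: "v \<in> I \<Longrightarrow> v \<le> s \<Longrightarrow> X v \<in> borel_measurable (past M I X s)"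
  unfolding past_def by (rule meas_gen) auto

lemma past_mono:
  assumes "s \<le> t"
  shows "subalgebra (past M I X t) (past M I X s)"
  unfolding subalgebra_def
proof
  show "sets (past M I X s) \<subseteq> sets (past M I X t)"
  proof -
    have "space (gen_sigma M X {v \<in> I. v \<le> t}) = space M" by simp
    have *:  "{X v -` A \<inter> space M | v A. v \<in> {v \<in> I. v \<le> s} \<and> A \<in> sets borel} \<subseteq> sets (gen_sigma M X {v \<in> I. v \<le> t})"
    proof
      fix B assume "B \<in> {X v -` A \<inter> space M | v A. v \<in> {v \<in> I. v \<le> s} \<and> A \<in> sets borel}"
      then obtain v A where B: "B = X v -` A \<inter> space M" "v \<in> I" "v \<le> s" "A \<in> sets borel" by blast
      have "X v \<in> borel_measurable (gen_sigma M X {v \<in> I. v \<le> t})" by (rule meas_gen) (use B assms in auto)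
      from measurable_sets[OF this B(4)] show "B \<in> sets (gen_sigma M X {v \<in> I. v \<le> t})" using B by simp
    qed
    from sets.sigma_sets_subset[OF *] show "sets (past M I X s) \<subseteq> sets (past M I X t)"
      unfolding past_def sets_gen_sigma[of M X "{v \<in> I. v \<le> s}"] by simp
  qed
qed (simp add: past_def)

lemma int_pow:
  assumes "standing M I X" "t \<in> I"
  shows "integrable M (\<lambda>\<omega>. X t \<omega> ^ n)"
proof -
  have m: "(\<lambda>\<omega>. X t \<omega> ^ n) \<in> borel_measurable M" using std_meas[OF assms] by measurable
  have "integrable M (\<lambda>\<omega>. \<bar>X t \<omega>\<bar> ^ n)" using assms by (simp add: standing_def)
  then have "integrable M (\<lambda>\<omega>. \<bar>X t \<omega> ^ n\<bar>)" by (simp add: power_abs)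
  then show ?thesis using integrable_abs_iff[OF m] by simp
qed

lemma int_prod:
  assumes "standing M I X" "t \<in> I" "s \<in> I"
  shows "integrable M (\<lambda>\<omega>. X t \<omega> ^ a * X s \<omega> ^ b)"
proof (rule Bochner_Integration.integrable_bound)
  show "integrable M (\<lambda>\<omega>. X t \<omega> ^ (2*a) + X s \<omega> ^ (2*b))"
    using int_pow[OF assms(1,2)] int_pow[OF assms(1,3)] by auto
  show "(\<lambda>\<omega>. X t \<omega> ^ a * X s \<omega> ^ b) \<in> borel_measurable M"
    using std_meas[OF assms(1,2)] std_meas[OF assms(1,3)] by measurable
  show "AE \<omega> in M. norm (X t \<omega> ^ a * X s \<omega> ^ b) \<le> norm (X t \<omega> ^ (2*a) + X s \<omega> ^ (2*b))"
  proof (rule AE_I2)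
    fix \<omega>
    let ?p = "X t \<omega> ^ a" and ?q = "X s \<omega> ^ b"
    have e1: "X t \<omega> ^ (2*a) = ?p^2" by (simp add: power_mult mult.commute)
    have e2: "X s \<omega> ^ (2*b) = ?q^2" by (simp add: power_mult mult.commute)
    have h: "0 \<le> (\<bar>?p\<bar> - \<bar>?q\<bar>)^2" by simp
    have h2: "0 \<le> \<bar>?p\<bar> * \<bar>?q\<bar>" by simp
    have h3: "2 * (\<bar>?p\<bar> * \<bar>?q\<bar>) \<le> ?p^2 + ?q^2"
      using h unfolding power2_eq_square by (simp add: algebra_simps abs_mult_self_eq)
    have "\<bar>?p * ?q\<bar> \<le> ?p^2 + ?q^2"
      unfolding abs_mult using h2 h3 by linarith
    then show "norm (?p * ?q) \<le> norm (X t \<omega> ^ (2*a) + X s \<omega> ^ (2*b))" unfolding e1 e2 by simp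
  qed
qed

lemma cond_exp_lin:
  fixes n :: nat and a :: "nat \<Rightarrow> real"
  assumes sfs: "sigma_finite_subalgebra M F" and f: "\<And>j. j < n \<Longrightarrow> integrable M (f j)"
  shows "AE \<omega> in M. real_cond_exp M F (\<lambda>\<omega>. \<Sum>j<n. a j * f j \<omega>) \<omega> = (\<Sum>j<n. a j * real_cond_exp M F (f j) \<omega>)"
proof -
  define g where "g j = (if j < n then (\<lambda>\<omega>. a j * f j \<omega>) else (\<lambda>_. 0::real))" for j
  have gi: "integrable M (g j)" for j using f by (simp add: g_def)
  have A0: "AE \<omega> in M. real_cond_exp M F (\<lambda>\<omega>. \<Sum>j\<in>{..<n}. g j \<omega>) \<omega> = (\<Sum>j\<in>{..<n}. real_cond_exp M F (g j) \<omega>)"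
    by (rule sigma_finite_subalgebra.real_cond_exp_sum[OF sfs gi])
  have fe: "(\<lambda>\<omega>. \<Sum>j\<in>{..<n}. g j \<omega>) = (\<lambda>\<omega>. \<Sum>j<n. a j * f j \<omega>)"
    by (auto simp: g_def intro!: sum.cong)
  from A0 have "AE \<omega> in M. real_cond_exp M F (\<lambda>\<omega>. \<Sum>j<n. a j * f j \<omega>) \<omega> = (\<Sum>j\<in>{..<n}. real_cond_exp M F (g j) \<omega>)"
    by (simp only: fe)
  moreover have "AE \<omega> in M. \<forall>j\<in>{..<n}. real_cond_exp M F (g j) \<omega> = a j * real_cond_exp M F (f j) \<omega>"
  proof -
    have "AE \<omega> in M. real_cond_exp M F (g j) \<omega> = a j * real_cond_exp M F (f j) \<omega>" if "j \<in> {..<n}" for j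
    proof -
      from that have "g j = (\<lambda>\<omega>. a j * f j \<omega>)" by (simp add: g_def)
    then show "AE \<omega> in M. real_cond_exp M F (g j) \<omega> = a j * real_cond_exp M F (f j) \<omega>"
      using sigma_finite_subalgebra.real_cond_exp_cmult[OF sfs f, of j "a j"] \<open>j \<in> {..<n}\<close> by simp
  qed
  then show ?thesis by (subst eventually_ball_finite_distrib) auto
  qed
  ultimately show ?thesis by eventually_elim (auto intro: sum.cong)
qed

lemma poly_unique:
  fixes a b :: "nat \<Rightarrow> real" and n :: nat
  assumes std: "standing M I X" and s: "s \<in> I"
   and ae: "AE \<omega> in M. (\<Sum>k<n. a k * X s \<omega> ^ k) = (\<Sum>k<n. b k * X s \<omega> ^ k)"
   and k: "k < n"
  shows "a k = b k"
proof (rule ccontr)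
  assume ne: "a k \<noteq> b k"
  define c where "c i = a i - b i" for i
  obtain m where n: "n = Suc m" using k by (cases n) auto
  define R where "R = {z::real. (\<Sum>i\<le>m. c i * z^i) = 0}"
  have fin: "finite R" unfolding R_def by (rule polyfun_roots_finite[of c k]) (use ne k n in \<open>auto simp: c_def\<close>)
  have aeR: "AE \<omega> in M. X s \<omega> \<in> R"
    using ae proof eventually_elim
    case (elim \<omega>)
    have "(\<Sum>i\<le>m. c i * X s \<omega>^i) = (\<Sum>k<n. a k * X s \<omega> ^ k) - (\<Sum>k<n. b k * X s \<omega> ^ k)"
      by (simp add: c_def n lessThan_Suc_atMost sum_subtractf algebra_simps)
    with elim show ?case by (simp add: R_def)
  qed
  have [measurable]: "X s \<in> borel_measurable M" using std_meas[OF std s] .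
  have "law_support M X s \<subseteq> R"
  proof
    fix x assume x: "x \<in> law_support M X s"
    show "x \<in> R"
    proof (rule ccontr)
      assume xR: "x \<notin> R"
      obtain e where e: "e > 0" "\<forall>r\<in>R. r \<noteq> x \<longrightarrow> e \<le> dist x r" using finite_set_avoid[OF fin] by blast
      let ?S = "{\<omega> \<in> space M. \<bar>X s \<omega> - x\<bar> < e}"
      have Sm: "?S \<in> sets M" by measurable
      have "AE \<omega> in M. \<omega> \<notin> ?S" using aeR proof eventually_elim
        case (elim \<omega>)
        then have "e \<le> dist x (X s \<omega>)" using e xR by auto
        then show ?case by (auto simp: dist_real_def abs_minus_commute)
      qed
      then have "?S \<in> null_sets M" using AE_iff_null_sets[OF Sm] by simp
      then have "measure M ?S = 0" by (simp add: measure_def null_setsD1)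
      moreover have "measure M ?S > 0" using x e unfolding law_support_def by auto
      ultimately show False by simp
    qed
  qed
  then show False using std fin s finite_subset unfolding standing_def by blast
qed

lemma sum_trunc:
  fixes f :: "nat \<Rightarrow> 'b::comm_monoid_add"
  assumes "n \<le> N" "\<And>k. n < k \<Longrightarrow> k < N+1 \<Longrightarrow> f k = 0"
  shows "(\<Sum>k<N+1. f k) = (\<Sum>k\<le>n. f k)"
  by (rule sum.mono_neutral_left[symmetric]) (use assms in auto)

lemma mult_idx:
  fixes A B :: "real mat"
  assumes "A \<in> carrier_mat m m" "B \<in> carrier_mat m m" "i < m" "j < m"
  shows "(A * B) $$ (i,j) = (\<Sum>k<m. A $$ (i,k) * B $$ (k,j))"
  using assms by (simp add: scalar_prod_def atLeast0LessThan)

lemma A_mat_carrier: "A_mat N \<gamma> s t \<in> carrier_mat (N+1) (N+1)"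
  by (simp add: A_mat_def)

lemma A_mat_idx: "i < N+1 \<Longrightarrow> j < N+1 \<Longrightarrow> A_mat N \<gamma> s t $$ (i,j) =
     (if i = 0 then (if j = 0 then 1 else 0) else if i < j then 0 else \<gamma> i j s t)"
  by (simp add: A_mat_def)

lemma A_mat_lt: "lower_tri (A_mat N \<gamma> s t)"
  by (simp add: lower_tri_def A_mat_def)

lemma ce_const:
  assumes std: "standing M I X"
  shows "AE \<omega> in M. real_cond_exp M (past M I X s) (\<lambda>\<omega>. c) \<omega> = c"
proof -
  interpret prob_space M using std_prob[OF std] .
  show ?thesis by (rule sigma_finite_subalgebra.real_cond_exp_F_meas[OF past_sfs[OF std]]) auto
qed

lemma reg_row:
  assumes std: "standing M I X" and pr: "poly_reg N M I X \<gamma>" and st: "s \<in> I" "t \<in> I" "s \<le> t"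
    and n: "n \<le> N"
  shows "AE \<omega> in M. real_cond_exp M (past M I X s) (\<lambda>\<omega>. X t \<omega> ^ n) \<omega>
            = (\<Sum>k<N+1. A_mat N \<gamma> s t $$ (n,k) * X s \<omega> ^ k)"
proof (cases "n = 0")
  case True
  have "(\<Sum>k<N+1. A_mat N \<gamma> s t $$ (n,k) * X s \<omega> ^ k) = 1" for \<omega>
  proof -
    have "(\<Sum>k<N+1. A_mat N \<gamma> s t $$ (n,k) * X s \<omega> ^ k) = (\<Sum>k\<le>0. A_mat N \<gamma> s t $$ (n,k) * X s \<omega> ^ k)"
      by (rule sum_trunc) (auto simp: A_mat_idx True)
    then show ?thesis by (simp add: A_mat_idx True)
  qed
  then show ?thesis using ce_const[OF std, of s 1] True by simp
next
  case False
  from pr have "AE \<omega> in M. real_cond_exp M (past M I X s) (\<lambda>\<omega>. X t \<omega> ^ n) \<omega> = (\<Sum>k\<le>n. \<gamma> n k s t * X s \<omega> ^ k)"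
    unfolding poly_reg_def using False n st by auto
  moreover have "(\<Sum>k<N+1. A_mat N \<gamma> s t $$ (n,k) * X s \<omega> ^ k) = (\<Sum>k\<le>n. \<gamma> n k s t * X s \<omega> ^ k)" for \<omega>
  proof -
    have "(\<Sum>k<N+1. A_mat N \<gamma> s t $$ (n,k) * X s \<omega> ^ k) = (\<Sum>k\<le>n. A_mat N \<gamma> s t $$ (n,k) * X s \<omega> ^ k)"
      by (rule sum_trunc) (use n in \<open>auto simp: A_mat_idx\<close>)
    also have "\<dots> = (\<Sum>k\<le>n. \<gamma> n k s t * X s \<omega> ^ k)"
      by (rule sum.cong) (use n False in \<open>auto simp: A_mat_idx\<close>)
    finally show ?thesis .
  qed
  ultimately show ?thesis by simp
qed

lemma chain:
  assumes std: "standing M I X" and pr: "poly_reg N M I X \<gamma>" and I: "s \<in> I" "t \<in> I" "u \<in> I"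
    and le: "s \<le> t" "t \<le> u"
  shows "A_mat N \<gamma> s u = A_mat N \<gamma> t u * A_mat N \<gamma> s t"
proof (rule eq_matI)
  let ?A = "A_mat N \<gamma>" and ?E = "real_cond_exp M (past M I X s)"
  let ?Et = "real_cond_exp M (past M I X t)"
  have sfs: "sigma_finite_subalgebra M (past M I X s)" by (rule past_sfs[OF std])
  have [measurable]: "X t \<in> borel_measurable M" "X s \<in> borel_measurable M" using std_meas std I by auto
  fix n j assume nj: "n < dim_row (?A t u * ?A s t)" "j < dim_col (?A t u * ?A s t)"
  then have n: "n < N+1" and j: "j < N+1" by (auto simp: A_mat_def)
  have E1: "AE \<omega> in M. ?E (\<lambda>\<omega>. X u \<omega> ^ n) \<omega> = (\<Sum>k<N+1. ?A s u $$ (n,k) * X s \<omega> ^ k)"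
    by (rule reg_row[OF std pr]) (use I le n in auto)
  have E2: "AE \<omega> in M. ?E (?Et (\<lambda>\<omega>. X u \<omega> ^ n)) \<omega> = ?E (\<lambda>\<omega>. X u \<omega> ^ n) \<omega>"
    by (rule sigma_finite_subalgebra.real_cond_exp_nested_subalg[OF sfs past_subalg[OF std] past_mono[OF le(1)] int_pow[OF std I(3)]])
  have E3': "AE \<omega> in M. ?Et (\<lambda>\<omega>. X u \<omega> ^ n) \<omega> = (\<Sum>k<N+1. ?A t u $$ (n,k) * X t \<omega> ^ k)"
    by (rule reg_row[OF std pr]) (use I le n in auto)
  have E3: "AE \<omega> in M. ?E (?Et (\<lambda>\<omega>. X u \<omega> ^ n)) \<omega> = ?E (\<lambda>\<omega>. \<Sum>k<N+1. ?A t u $$ (n,k) * X t \<omega> ^ k) \<omega>"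
    by (rule sigma_finite_subalgebra.real_cond_exp_cong[OF sfs E3']) auto
  have E4: "AE \<omega> in M. ?E (\<lambda>\<omega>. \<Sum>k<N+1. ?A t u $$ (n,k) * X t \<omega> ^ k) \<omega> = (\<Sum>k<N+1. ?A t u $$ (n,k) * ?E (\<lambda>\<omega>. X t \<omega> ^ k) \<omega>)"
    by (rule cond_exp_lin[OF sfs]) (rule int_pow[OF std I(2)])
  have E5: "AE \<omega> in M. \<forall>k\<in>{..<N+1}. ?E (\<lambda>\<omega>. X t \<omega> ^ k) \<omega> = (\<Sum>i<N+1. ?A s t $$ (k,i) * X s \<omega> ^ i)"
  proof -
    have R5: "AE \<omega> in M. ?E (\<lambda>\<omega>. X t \<omega> ^ k) \<omega> = (\<Sum>i<N+1. ?A s t $$ (k,i) * X s \<omega> ^ i)"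
      if "k \<in> {..<N+1}" for k
      by (rule reg_row[OF std pr]) (use I le that in auto)
    show ?thesis by (rule eventually_ball_finite[OF finite_lessThan]) (blast intro: R5)
  qed
  have "AE \<omega> in M. (\<Sum>k<N+1. ?A s u $$ (n,k) * X s \<omega> ^ k) = (\<Sum>k<N+1. (?A t u * ?A s t) $$ (n,k) * X s \<omega> ^ k)"
    using E1 E2 E3 E4 E5
  proof eventually_elim
    case (elim \<omega>)
    have "(\<Sum>k<N+1. ?A s u $$ (n,k) * X s \<omega> ^ k) = (\<Sum>k<N+1. ?A t u $$ (n,k) * (\<Sum>i<N+1. ?A s t $$ (k,i) * X s \<omega> ^ i))"
      using elim by (auto intro!: sum.cong)
    also have "\<dots> = (\<Sum>i<N+1. (\<Sum>k<N+1. ?A t u $$ (n,k) * ?A s t $$ (k,i)) * X s \<omega> ^ i)"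
      by (simp only: sum_distrib_left sum_distrib_right mult.assoc) (rule sum.swap)
    also have "\<dots> = (\<Sum>i<N+1. (?A t u * ?A s t) $$ (n,i) * X s \<omega> ^ i)"
      by (rule sum.cong) (use n in \<open>auto simp: mult_idx[OF A_mat_carrier A_mat_carrier]\<close>)
    finally show ?case .
  qed
  from poly_unique[OF std I(1) this, of j] j
  show "?A s u $$ (n,j) = (?A t u * ?A s t) $$ (n,j)" by simp
qed (auto simp: A_mat_def)

lemma A_refl:
  assumes std: "standing M I X" and pr: "poly_reg N M I X \<gamma>" and s: "s \<in> I"
  shows "A_mat N \<gamma> s s = 1\<^sub>m (N+1)"
proof (rule eq_matI)
  let ?A = "A_mat N \<gamma> s s" and ?E = "real_cond_exp M (past M I X s)"
  have sfs: "sigma_finite_subalgebra M (past M I X s)" by (rule past_sfs[OF std])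
  have [measurable]: "X s \<in> borel_measurable (past M I X s)" by (rule meas_past[OF s]) simp
  fix n j assume "n < dim_row (1\<^sub>m (N+1) :: real mat)" "j < dim_col (1\<^sub>m (N+1) :: real mat)"
  then have n: "n < N+1" and j: "j < N+1" by auto
  have E1: "AE \<omega> in M. ?E (\<lambda>\<omega>. X s \<omega> ^ n) \<omega> = (\<Sum>k<N+1. ?A $$ (n,k) * X s \<omega> ^ k)"
    by (rule reg_row[OF std pr]) (use s n in auto)
  have E2: "AE \<omega> in M. ?E (\<lambda>\<omega>. X s \<omega> ^ n) \<omega> = X s \<omega> ^ n"
    by (rule sigma_finite_subalgebra.real_cond_exp_F_meas[OF sfs int_pow[OF std s]]) measurable
  have "AE \<omega> in M. (\<Sum>k<N+1. ?A $$ (n,k) * X s \<omega> ^ k) = (\<Sum>k<N+1. (1\<^sub>m (N+1) :: real mat) $$ (n,k) * X s \<omega> ^ k)"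
    using E1 E2
  proof eventually_elim
    case (elim \<omega>)
    have "(\<Sum>k<N+1. (1\<^sub>m (N+1) :: real mat) $$ (n,k) * X s \<omega> ^ k) = (\<Sum>k<N+1. (if k = n then X s \<omega> ^ k else 0))"
      by (rule sum.cong) (use n in auto)
    also have "\<dots> = X s \<omega> ^ n" using n by simp
    finally show ?case using elim by simp
  qed
  from poly_unique[OF std s this, of j] j show "?A $$ (n,j) = (1\<^sub>m (N+1) :: real mat) $$ (n,j)" by simp
qed (auto simp: A_mat_def)

lemma cov_reg:
  assumes std: "standing M I X" and pr: "poly_reg N M I X \<gamma>" and I: "s \<in> I" "t \<in> I" and le: "s \<le> t"
    and a: "a \<le> N"
  shows "cov M (\<lambda>\<omega>. X t \<omega> ^ a) (\<lambda>\<omega>. X s \<omega> ^ b)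
       = (\<Sum>k<N+1. A_mat N \<gamma> s t $$ (a,k) * cov M (\<lambda>\<omega>. X s \<omega> ^ k) (\<lambda>\<omega>. X s \<omega> ^ b))"
proof -
  let ?A = "A_mat N \<gamma> s t" and ?E = "real_cond_exp M (past M I X s)"
  have sfs: "sigma_finite_subalgebra M (past M I X s)" by (rule past_sfs[OF std])
  have [measurable]: "X s \<in> borel_measurable (past M I X s)" by (rule meas_past[OF I(1)]) simp
  have [measurable]: "X s \<in> borel_measurable M" "X t \<in> borel_measurable M" using std_meas std I by auto
  have R: "AE \<omega> in M. ?E (\<lambda>\<omega>. X t \<omega> ^ a) \<omega> = (\<Sum>k<N+1. ?A $$ (a,k) * X s \<omega> ^ k)"
    by (rule reg_row[OF std pr]) (use I le a in auto)
  have I1: "(\<integral>\<omega>. X t \<omega> ^ a * X s \<omega> ^ b \<partial>M) = (\<Sum>k<N+1. ?A $$ (a,k) * (\<integral>\<omega>. X s \<omega> ^ k * X s \<omega> ^ b \<partial>M))"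
  proof -
    have "(\<integral>\<omega>. X t \<omega> ^ a * X s \<omega> ^ b \<partial>M) = (\<integral>\<omega>. X s \<omega> ^ b * X t \<omega> ^ a \<partial>M)"
      by (simp add: mult.commute)
    also have "\<dots> = (\<integral>\<omega>. X s \<omega> ^ b * ?E (\<lambda>\<omega>. X t \<omega> ^ a) \<omega> \<partial>M)"
      by (rule sigma_finite_subalgebra.real_cond_exp_intg(2)[OF sfs, symmetric])
         (use int_prod[OF std I(1,2)] in auto)
    also have "\<dots> = (\<integral>\<omega>. X s \<omega> ^ b * (\<Sum>k<N+1. ?A $$ (a,k) * X s \<omega> ^ k) \<partial>M)"
      by (rule integral_cong_AE) (use R in auto)
    also have "\<dots> = (\<integral>\<omega>. (\<Sum>k<N+1. ?A $$ (a,k) * (X s \<omega> ^ k * X s \<omega> ^ b)) \<partial>M)"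
      by (rule Bochner_Integration.integral_cong) (auto simp: sum_distrib_left algebra_simps)
    also have "\<dots> = (\<Sum>k<N+1. ?A $$ (a,k) * (\<integral>\<omega>. X s \<omega> ^ k * X s \<omega> ^ b \<partial>M))"
      by (subst Bochner_Integration.integral_sum) (use int_prod[OF std I(1,1)] in auto)
    finally show ?thesis .
  qed
  have I2: "(\<integral>\<omega>. X t \<omega> ^ a \<partial>M) = (\<Sum>k<N+1. ?A $$ (a,k) * (\<integral>\<omega>. X s \<omega> ^ k \<partial>M))"
  proof -
    have "(\<integral>\<omega>. X t \<omega> ^ a \<partial>M) = (\<integral>\<omega>. ?E (\<lambda>\<omega>. X t \<omega> ^ a) \<omega> \<partial>M)"
      by (rule sigma_finite_subalgebra.real_cond_exp_int(2)[OF sfs, symmetric]) (rule int_pow[OF std I(2)])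
    also have "\<dots> = (\<integral>\<omega>. (\<Sum>k<N+1. ?A $$ (a,k) * X s \<omega> ^ k) \<partial>M)"
      by (rule integral_cong_AE) (use R in auto)
    also have "\<dots> = (\<Sum>k<N+1. ?A $$ (a,k) * (\<integral>\<omega>. X s \<omega> ^ k \<partial>M))"
      by (subst Bochner_Integration.integral_sum) (use int_pow[OF std I(1)] in auto)
    finally show ?thesis .
  qed
  show ?thesis unfolding cov_def I1 I2
    by (simp only: right_diff_distrib sum_subtractf sum_distrib_right mult.assoc)
qed

lemma diag_nz:
  assumes std: "standing M I X" and pr: "poly_reg N M I X \<gamma>" and tli: "TLI N M I X"
    and I: "s \<in> I" "t \<in> I" and lt: "s < t" and n: "1 \<le> n" "n \<le> N"
  shows "A_mat N \<gamma> s t $$ (n,n) \<noteq> 0"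
proof
  assume z: "A_mat N \<gamma> s t $$ (n,n) = 0"
  let ?A = "A_mat N \<gamma> s t"
  define G where "G = mat n n (\<lambda>(i,k). ?A $$ (i+1,k+1))"
  define C where "C = mat n n (\<lambda>(k,j). cov M (\<lambda>\<omega>. X s \<omega> ^ (k+1)) (\<lambda>\<omega>. X s \<omega> ^ (j+1)))"
  define D where "D = mat n n (\<lambda>(i,j). cov M (\<lambda>\<omega>. X t \<omega> ^ (i+1)) (\<lambda>\<omega>. X s \<omega> ^ (j+1)))"
  have dD: "det D \<noteq> 0" using tli n I lt unfolding TLI_def D_def by auto
  interpret prob_space M using std_prob[OF std] .
  have c0: "cov M (\<lambda>\<omega>. X s \<omega> ^ 0) g = 0" for g by (simp add: cov_def prob_space)
  have Gc: "G \<in> carrier_mat n n" and Cc: "C \<in> carrier_mat n n" by (auto simp: G_def C_def)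
  have DGC: "D = G * C"
  proof (rule eq_matI)
    fix i j assume "i < dim_row (G * C)" "j < dim_col (G * C)"
    then have i: "i < n" and j: "j < n" using Gc Cc by auto
    let ?f = "\<lambda>k. ?A $$ (i+1,k) * cov M (\<lambda>\<omega>. X s \<omega> ^ k) (\<lambda>\<omega>. X s \<omega> ^ (j+1))"
    have "D $$ (i,j) = cov M (\<lambda>\<omega>. X t \<omega> ^ (i+1)) (\<lambda>\<omega>. X s \<omega> ^ (j+1))" using i j by (simp add: D_def)
    also have "\<dots> = (\<Sum>k<N+1. ?f k)" by (rule cov_reg[OF std pr I]) (use lt i n in auto)
    also have "\<dots> = ?f 0 + (\<Sum>k<N. ?f (Suc k))" by (simp only: Suc_eq_plus1[symmetric] sum.lessThan_Suc_shift)
    also have "\<dots> = (\<Sum>k<N. ?f (Suc k))" using c0 by simp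
    also have "\<dots> = (\<Sum>k<n. ?f (Suc k))"
    proof (rule sum.mono_neutral_right)
      show "\<forall>k\<in>{..<N} - {..<n}. ?f (Suc k) = 0"
      proof
        fix k assume k: "k \<in> {..<N} - {..<n}"
        then have "?A $$ (i+1, Suc k) = 0" using i by (auto simp: A_mat_idx)
        then show "?f (Suc k) = 0" by simp
      qed
    qed (use n in auto)
    also have "\<dots> = (G * C) $$ (i,j)"
      by (subst mult_idx[OF Gc Cc i j]) (auto intro!: sum.cong simp: G_def C_def i j)
    finally show "D $$ (i,j) = (G * C) $$ (i,j)" .
  qed (auto simp: D_def G_def C_def)
  have Glt: "lower_tri G" using n by (auto simp: lower_tri_def G_def A_mat_idx)
  have "det G = (\<Prod>i<n. G $$ (i,i))" by (rule lower_tri_det[OF Gc Glt])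
  also have "\<dots> = 0"
  proof -
    have "n - 1 \<in> {..<n}" "G $$ (n-1,n-1) = 0" using n z by (auto simp: G_def)
    then show ?thesis by (meson finite_lessThan prod_zero)
  qed
  finally have "det D = 0" unfolding DGC det_mult[OF Gc Cc] by simp
  with dD show False by simp
qed

lemma A_det:
  assumes std: "standing M I X" and pr: "poly_reg N M I X \<gamma>" and tli: "TLI N M I X"
    and I: "s \<in> I" "t \<in> I" and le: "s \<le> t"
  shows "det (A_mat N \<gamma> s t) \<noteq> 0"
proof (cases "s = t")
  case True then show ?thesis using A_refl[OF std pr I(1)] by simp
next
  case False
  then have lt: "s < t" using le by simp
  have "det (A_mat N \<gamma> s t) = (\<Prod>i<N+1. A_mat N \<gamma> s t $$ (i,i))"
    by (rule lower_tri_det[OF A_mat_carrier A_mat_lt])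
  also have "\<dots> \<noteq> 0"
  proof -
    have "A_mat N \<gamma> s t $$ (i,i) \<noteq> 0" if "i < N+1" for i
    proof (cases "i = 0")
      case True then show ?thesis by (simp add: A_mat_idx)
    next
      case False then show ?thesis using diag_nz[OF std pr tli I lt, of i] that by simp
    qed
    then show ?thesis by simp
  qed
  finally show ?thesis .
qed

lemma exists_structural:
  assumes std: "standing M I X" and pr: "poly_reg N M I X \<gamma>" and tli: "TLI N M I X"
  shows "\<exists>V. structural_matrix N M I X V"
proof (cases "I = {}")
  case True
  show ?thesis
    by (rule exI[of _ "\<lambda>_. 1\<^sub>m (N+1)"]) (use True pr in \<open>auto simp: structural_matrix_def nonsing_lt_family_def\<close>)
next
  case False
  then obtain t0 where t0: "t0 \<in> I" by auto
  let ?A = "A_mat N \<gamma>"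
  define V where "V t = (if t0 \<le> t then ?A t0 t else minv (?A t t0))" for t
  have Ac: "?A s t \<in> carrier_mat (N+1) (N+1)" for s t by (rule A_mat_carrier)
  have Ad: "det (?A s t) \<noteq> 0" if "s \<in> I" "t \<in> I" "s \<le> t" for s t by (rule A_det[OF std pr tli that])
  have fam: "nonsing_lt_family N I V"
    unfolding nonsing_lt_family_def
  proof
    fix t assume t: "t \<in> I"
    show "V t \<in> carrier_mat (N+1) (N+1) \<and> lower_tri (V t) \<and> det (V t) \<noteq> 0"
    proof (cases "t0 \<le> t")
      case True then show ?thesis using Ad[OF t0 t True] Ac[of t0 t] by (simp add: V_def A_mat_lt)
    next
      case False
      then have le: "t \<le> t0" by simp
      show ?thesis using False Ad[OF t t0 le] minv_props(1)[OF Ac] lower_tri_minv[OF Ac A_mat_lt] minv_det[OF Ac]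
        by (simp add: V_def)
    qed
  qed
  have str: "?A s u = V u * minv (V s)" if s: "s \<in> I" and u: "u \<in> I" and su: "s \<le> u" for s u
  proof (cases "t0 \<le> s")
    case True
    have d: "det (?A t0 s) \<noteq> 0" by (rule Ad[OF t0 s True])
    have "V u * minv (V s) = ?A t0 u * minv (?A t0 s)" using True su by (simp add: V_def)
    also have "\<dots> = (?A s u * ?A t0 s) * minv (?A t0 s)" using chain[OF std pr t0 s u True su] by simp
    also have "\<dots> = ?A s u * (?A t0 s * minv (?A t0 s))"
      by (rule assoc_mult_mat[OF Ac Ac minv_props(1)[OF Ac d]])
    also have "\<dots> = ?A s u" using minv_props(2)[OF Ac d] right_mult_one_mat[OF Ac] by simp
    finally show ?thesis by simp
  next
    case False
    then have st0: "s \<le> t0" by simp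
    have d: "det (?A s t0) \<noteq> 0" by (rule Ad[OF s t0 st0])
    have mV: "minv (V s) = ?A s t0" using False by (simp add: V_def minv_minv[OF Ac d])
    show ?thesis
    proof (cases "t0 \<le> u")
      case True
      then show ?thesis using mV chain[OF std pr s t0 u st0 True] by (simp add: V_def)
    next
      case False
      then have ut0: "u \<le> t0" by simp
      have d2: "det (?A u t0) \<noteq> 0" by (rule Ad[OF u t0 ut0])
      have "V u * minv (V s) = minv (?A u t0) * (?A u t0 * ?A s u)"
        using False mV chain[OF std pr s u t0 su ut0] by (simp add: V_def)
      also have "\<dots> = (minv (?A u t0) * ?A u t0) * ?A s u"
        by (rule assoc_mult_mat[OF minv_props(1)[OF Ac d2] Ac Ac, symmetric])
      also have "\<dots> = ?A s u" using minv_props(3)[OF Ac d2] left_mult_one_mat[OF Ac] by simp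
      finally show ?thesis by simp
    qed
  qed
  show ?thesis
    by (rule exI[of _ V]) (use fam pr str in \<open>auto simp: structural_matrix_def\<close>)
qed

lemma mv_idx:
  fixes B :: "real mat"
  assumes "B \<in> carrier_mat m m" "i < m" "dim_vec v = m"
  shows "(B *\<^sub>v v) $ i = (\<Sum>k<m. B $$ (i,k) * v $ k)"
  using assms by (simp add: scalar_prod_def atLeast0LessThan)

lemma Xvec_idx: "k < N+1 \<Longrightarrow> Xvec N X t \<omega> $ k = X t \<omega> ^ k"
  by (simp add: Xvec_def)

lemma Xvec_dim[simp]: "dim_vec (Xvec N X t \<omega>) = N+1"
  by (simp add: Xvec_def)

lemma mvX_idx:
  fixes B :: "real mat"
  assumes "B \<in> carrier_mat (N+1) (N+1)" "i < N+1"
  shows "(B *\<^sub>v Xvec N X t \<omega>) $ i = (\<Sum>k<N+1. B $$ (i,k) * X t \<omega> ^ k)"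
  using mv_idx[OF assms Xvec_dim] by (simp add: Xvec_idx)

lemma martingale_cong:
  assumes "martingale M I X Y" "\<And>t \<omega>. t \<in> I \<Longrightarrow> Y t \<omega> = Y' t \<omega>"
  shows "martingale M I X Y'"
proof -
  have "t \<in> I \<Longrightarrow> Y t = Y' t" for t using assms(2) by auto
  then show ?thesis using assms(1) unfolding martingale_def by auto
qed

lemma poly_int:
  assumes std: "standing M I X" and t: "t \<in> I"
  shows "integrable M (\<lambda>\<omega>. \<Sum>k<n. b k * X t \<omega> ^ k)"
  using int_pow[OF std t] by auto

lemma poly_meas:
  assumes t: "t \<in> I"
  shows "(\<lambda>\<omega>. \<Sum>k<n. b k * X t \<omega> ^ k) \<in> borel_measurable (past M I X t)"
proof -
  have [measurable]: "X t \<in> borel_measurable (past M I X t)" by (rule meas_past[OF t]) simp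
  show ?thesis by measurable
qed

lemma mart_rows:
  assumes std: "standing M I X" and pr: "poly_reg N M I X \<gamma>"
    and Bc: "\<And>t. t \<in> I \<Longrightarrow> B t \<in> carrier_mat (N+1) (N+1)"
    and BA: "\<And>s t. s \<in> I \<Longrightarrow> t \<in> I \<Longrightarrow> s \<le> t \<Longrightarrow> B t * A_mat N \<gamma> s t = B s"
    and i: "i \<le> N"
  shows "martingale M I X (\<lambda>t \<omega>. (B t *\<^sub>v Xvec N X t \<omega>) $ i)"
proof (rule martingale_cong)
  show "(\<Sum>k<N+1. B t $$ (i,k) * X t \<omega> ^ k) = (B t *\<^sub>v Xvec N X t \<omega>) $ i" if "t \<in> I" for t \<omega>
    by (rule mvX_idx[OF Bc[OF that], symmetric]) (use i in simp)
  show "martingale M I X (\<lambda>t \<omega>. \<Sum>k<N+1. B t $$ (i,k) * X t \<omega> ^ k)"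
    unfolding martingale_def
  proof (intro conjI ballI impI)
    fix t assume t: "t \<in> I"
    show "integrable M (\<lambda>\<omega>. \<Sum>k<N+1. B t $$ (i,k) * X t \<omega> ^ k)" by (rule poly_int[OF std t])
    show "(\<lambda>\<omega>. \<Sum>k<N+1. B t $$ (i,k) * X t \<omega> ^ k) \<in> borel_measurable (past M I X t)" by (rule poly_meas[OF t])
  next
    fix s t assume s: "s \<in> I" and t: "t \<in> I" and st: "s \<le> t"
    let ?E = "real_cond_exp M (past M I X s)" and ?A = "A_mat N \<gamma> s t"
    have sfs: "sigma_finite_subalgebra M (past M I X s)" by (rule past_sfs[OF std])
    have E1: "AE \<omega> in M. ?E (\<lambda>\<omega>. \<Sum>k<N+1. B t $$ (i,k) * X t \<omega> ^ k) \<omega> = (\<Sum>k<N+1. B t $$ (i,k) * ?E (\<lambda>\<omega>. X t \<omega> ^ k) \<omega>)"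
      by (rule cond_exp_lin[OF sfs]) (rule int_pow[OF std t])
    have E2: "AE \<omega> in M. \<forall>k\<in>{..<N+1}. ?E (\<lambda>\<omega>. X t \<omega> ^ k) \<omega> = (\<Sum>j<N+1. ?A $$ (k,j) * X s \<omega> ^ j)"
    proof -
      have R5: "AE \<omega> in M. ?E (\<lambda>\<omega>. X t \<omega> ^ k) \<omega> = (\<Sum>j<N+1. ?A $$ (k,j) * X s \<omega> ^ j)"
        if "k \<in> {..<N+1}" for k
        by (rule reg_row[OF std pr]) (use s t st that in auto)
      show ?thesis by (rule eventually_ball_finite[OF finite_lessThan]) (blast intro: R5)
    qed
    show "AE \<omega> in M. ?E (\<lambda>\<omega>. \<Sum>k<N+1. B t $$ (i,k) * X t \<omega> ^ k) \<omega> = (\<Sum>k<N+1. B s $$ (i,k) * X s \<omega> ^ k)"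
      using E1 E2
    proof eventually_elim
      case (elim \<omega>)
      have "?E (\<lambda>\<omega>. \<Sum>k<N+1. B t $$ (i,k) * X t \<omega> ^ k) \<omega> = (\<Sum>k<N+1. B t $$ (i,k) * (\<Sum>j<N+1. ?A $$ (k,j) * X s \<omega> ^ j))"
        using elim by (auto intro!: sum.cong)
      also have "\<dots> = (\<Sum>j<N+1. (\<Sum>k<N+1. B t $$ (i,k) * ?A $$ (k,j)) * X s \<omega> ^ j)"
        by (simp only: sum_distrib_left sum_distrib_right mult.assoc) (rule sum.swap)
      also have "\<dots> = (\<Sum>j<N+1. (B t * ?A) $$ (i,j) * X s \<omega> ^ j)"
        by (rule sum.cong) (use i in \<open>auto simp: mult_idx[OF Bc[OF t] A_mat_carrier]\<close>)
      also have "\<dots> = (\<Sum>j<N+1. B s $$ (i,j) * X s \<omega> ^ j)" using BA[OF s t st] by simp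
      finally show ?case .
    qed
  qed
qed

lemma part2:
  assumes std: "standing M I X" and sm: "structural_matrix N M I X V" and i: "i \<le> N"
  shows "martingale M I X (\<lambda>t \<omega>. (minv (V t) *\<^sub>v Xvec N X t \<omega>) $ i)"
proof -
  from sm obtain \<gamma> where pr: "poly_reg N M I X \<gamma>"
    and AV: "\<And>s u. s \<in> I \<Longrightarrow> u \<in> I \<Longrightarrow> s \<le> u \<Longrightarrow> A_mat N \<gamma> s u = V u * minv (V s)"
    and fam: "nonsing_lt_family N I V"
    unfolding structural_matrix_def by blast
  have Vc: "V t \<in> carrier_mat (N+1) (N+1)" and Vd: "det (V t) \<noteq> 0" if "t \<in> I" for t
    using fam that unfolding nonsing_lt_family_def by auto
  show ?thesis
  proof (rule mart_rows[OF std pr _ _ i])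
    show "minv (V t) \<in> carrier_mat (N+1) (N+1)" if "t \<in> I" for t by (rule minv_props(1)[OF Vc[OF that] Vd[OF that]])
    fix s t assume s: "s \<in> I" and t: "t \<in> I" and st: "s \<le> t"
    have "minv (V t) * A_mat N \<gamma> s t = minv (V t) * (V t * minv (V s))" using AV[OF s t st] by simp
    also have "\<dots> = (minv (V t) * V t) * minv (V s)"
      by (rule assoc_mult_mat[symmetric, OF minv_props(1)[OF Vc[OF t] Vd[OF t]] Vc[OF t] minv_props(1)[OF Vc[OF s] Vd[OF s]]])
    also have "\<dots> = minv (V s)" using minv_props(3)[OF Vc[OF t] Vd[OF t]] minv_props(1)[OF Vc[OF s] Vd[OF s]] by simp
    finally show "minv (V t) * A_mat N \<gamma> s t = minv (V s)" .
  qed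
qed

lemma Xvec_carrier: "Xvec N X t \<omega> \<in> carrier_vec (N+1)"
  by (simp add: Xvec_def)

lemma part3_key:
  assumes std: "standing M I X" and fam: "nonsing_lt_family N I W"
    and mart: "\<forall>i\<le>N. martingale M I X (\<lambda>t \<omega>. (W t *\<^sub>v Xvec N X t \<omega>) $ i)"
    and s: "s \<in> I" and t: "t \<in> I" and st: "s \<le> t" and i: "i \<le> N"
  shows "AE \<omega> in M. real_cond_exp M (past M I X s) (\<lambda>\<omega>. Xvec N X t \<omega> $ i) \<omega>
            = (minv (W t) * W s *\<^sub>v Xvec N X s \<omega>) $ i"
proof -
  have Wc: "W u \<in> carrier_mat (N+1) (N+1)" and Wd: "det (W u) \<noteq> 0" if "u \<in> I" for u
    using fam that unfolding nonsing_lt_family_def by auto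
  let ?Wi = "minv (W t)" and ?E = "real_cond_exp M (past M I X s)"
  have Wic: "?Wi \<in> carrier_mat (N+1) (N+1)" by (rule minv_props(1)[OF Wc[OF t] Wd[OF t]])
  define f where "f j = (\<lambda>\<omega>. (W t *\<^sub>v Xvec N X t \<omega>) $ j)" for j
  have pw: "Xvec N X t \<omega> $ i = (\<Sum>j<N+1. ?Wi $$ (i,j) * f j \<omega>)" for \<omega>
  proof -
    have "Xvec N X t \<omega> = (?Wi * W t) *\<^sub>v Xvec N X t \<omega>"
      unfolding minv_props(3)[OF Wc[OF t] Wd[OF t]] by (rule one_mult_mat_vec[OF Xvec_carrier, symmetric])
    also have "\<dots> = ?Wi *\<^sub>v (W t *\<^sub>v Xvec N X t \<omega>)"
      by (rule assoc_mult_mat_vec[OF Wic Wc[OF t] Xvec_carrier])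
    finally have "Xvec N X t \<omega> $ i = (?Wi *\<^sub>v (W t *\<^sub>v Xvec N X t \<omega>)) $ i" by simp
    also have "\<dots> = (\<Sum>j<N+1. ?Wi $$ (i,j) * f j \<omega>)"
      unfolding f_def by (rule mv_idx[OF Wic]) (use i Wc[OF t] in auto)
    finally show ?thesis .
  qed
  have fi: "integrable M (f j)" if "j < N+1" for j
    using mart that t unfolding martingale_def f_def by auto
  have sfs: "sigma_finite_subalgebra M (past M I X s)" by (rule past_sfs[OF std])
  have E1: "AE \<omega> in M. ?E (\<lambda>\<omega>. \<Sum>j<N+1. ?Wi $$ (i,j) * f j \<omega>) \<omega> = (\<Sum>j<N+1. ?Wi $$ (i,j) * ?E (f j) \<omega>)"
    by (rule cond_exp_lin[OF sfs fi])
  have E2: "AE \<omega> in M. \<forall>j\<in>{..<N+1}. ?E (f j) \<omega> = (W s *\<^sub>v Xvec N X s \<omega>) $ j"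
  proof -
    have R5: "AE \<omega> in M. ?E (f j) \<omega> = (W s *\<^sub>v Xvec N X s \<omega>) $ j" if "j \<in> {..<N+1}" for j
      using mart that s t st unfolding martingale_def f_def by auto
    show ?thesis by (rule eventually_ball_finite[OF finite_lessThan]) (blast intro: R5)
  qed
  have fe: "(\<lambda>\<omega>. Xvec N X t \<omega> $ i) = (\<lambda>\<omega>. \<Sum>j<N+1. ?Wi $$ (i,j) * f j \<omega>)" using pw by auto
  show ?thesis unfolding fe using E1 E2
  proof eventually_elim
    case (elim \<omega>)
    have "?E (\<lambda>\<omega>. \<Sum>j<N+1. ?Wi $$ (i,j) * f j \<omega>) \<omega> = (\<Sum>j<N+1. ?Wi $$ (i,j) * (W s *\<^sub>v Xvec N X s \<omega>) $ j)"
      using elim by (auto intro!: sum.cong)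
    also have "\<dots> = (?Wi *\<^sub>v (W s *\<^sub>v Xvec N X s \<omega>)) $ i"
      by (rule mv_idx[OF Wic, symmetric]) (use i Wc[OF s] in auto)
    also have "\<dots> = (?Wi * W s *\<^sub>v Xvec N X s \<omega>) $ i"
      by (simp add: assoc_mult_mat_vec[OF Wic Wc[OF s] Xvec_carrier])
    finally show ?case .
  qed
qed

lemma lower_triD: "lower_tri A \<Longrightarrow> A \<in> carrier_mat m m \<Longrightarrow> i < j \<Longrightarrow> j < m \<Longrightarrow> A $$ (i,j) = 0"
  by (auto simp: lower_tri_def)

lemma part3_full:
  assumes std: "standing M I X" and mk: "markov M I X" and tli: "TLI N M I X" and msc: "MSC N M I X"
    and fam: "nonsing_lt_family N I W"
    and mart: "\<forall>i\<le>N. martingale M I X (\<lambda>t \<omega>. (W t *\<^sub>v Xvec N X t \<omega>) $ i)"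
  shows "MPR N M I X \<and> structural_matrix N M I X (\<lambda>t. minv (W t))"
proof -
  have Wc: "W u \<in> carrier_mat (N+1) (N+1)" and Wd: "det (W u) \<noteq> 0" and Wl: "lower_tri (W u)" if "u \<in> I" for u
    using fam that unfolding nonsing_lt_family_def by auto
  have Wic: "minv (W u) \<in> carrier_mat (N+1) (N+1)" if "u \<in> I" for u by (rule minv_props(1)[OF Wc[OF that] Wd[OF that]])
  have Wil: "lower_tri (minv (W u))" if "u \<in> I" for u by (rule lower_tri_minv[OF Wc[OF that] Wl[OF that] Wd[OF that]])
  have Bc: "minv (W t) * W s \<in> carrier_mat (N+1) (N+1)" if "s \<in> I" "t \<in> I" for s t
    using Wic[OF that(2)] Wc[OF that(1)] by auto
  have Bl: "lower_tri (minv (W t) * W s)" if "s \<in> I" "t \<in> I" for s t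
    by (rule lower_tri_mult[OF Wic[OF that(2)] Wc[OF that(1)] Wil[OF that(2)] Wl[OF that(1)]])
  define \<gamma> where "\<gamma> n k s t = (minv (W t) * W s) $$ (n,k)" for n k s t
  have key: "AE \<omega> in M. real_cond_exp M (past M I X s) (\<lambda>\<omega>. X t \<omega> ^ n) \<omega>
      = (\<Sum>k\<le>n. (minv (W t) * W s) $$ (n,k) * X s \<omega> ^ k)"
    if s: "s \<in> I" and t: "t \<in> I" and st: "s \<le> t" and n: "n \<le> N" for s t n
  proof -
    have fe: "(\<lambda>\<omega>. Xvec N X t \<omega> $ n) = (\<lambda>\<omega>. X t \<omega> ^ n)" using n by (simp add: Xvec_idx)
    have "(minv (W t) * W s *\<^sub>v Xvec N X s \<omega>) $ n = (\<Sum>k<N+1. (minv (W t) * W s) $$ (n,k) * X s \<omega> ^ k)" for \<omega>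
      by (rule mvX_idx[OF Bc[OF s t]]) (use n in simp)
    also have "\<dots> \<omega> = (\<Sum>k\<le>n. (minv (W t) * W s) $$ (n,k) * X s \<omega> ^ k)" for \<omega>
      by (rule sum_trunc) (use n lower_triD[OF Bl[OF s t] Bc[OF s t]] in \<open>auto simp del: index_mult_mat\<close>)
    finally show ?thesis using part3_key[OF std fam mart s t st n] unfolding fe by simp
  qed
  have pr: "poly_reg N M I X \<gamma>" unfolding poly_reg_def \<gamma>_def using key by auto
  have B00: "(minv (W t) * W s) $$ (0,0) = 1" if s: "s \<in> I" and t: "t \<in> I" and st: "s \<le> t" for s t
  proof -
    interpret prob_space M using std_prob[OF std] .
    have "AE \<omega> in M. real_cond_exp M (past M I X s) (\<lambda>\<omega>. 1) \<omega> = (minv (W t) * W s) $$ (0,0)"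
      using key[OF s t st, of 0] by simp
    moreover have "AE \<omega> in M. real_cond_exp M (past M I X s) (\<lambda>\<omega>. 1) \<omega> = 1" by (rule ce_const[OF std])
    ultimately have "AE \<omega> in M. (minv (W t) * W s) $$ (0,0) = 1" by eventually_elim simp
    then show ?thesis by simp
  qed
  have Aeq: "A_mat N \<gamma> s u = minv (W u) * minv (minv (W s))" if s: "s \<in> I" and u: "u \<in> I" and su: "s \<le> u" for s u
  proof -
    have "A_mat N \<gamma> s u = minv (W u) * W s"
    proof (rule eq_matI)
      fix i j assume "i < dim_row (minv (W u) * W s)" "j < dim_col (minv (W u) * W s)"
      then have i: "i < N+1" and j: "j < N+1" using Bc[OF s u] by auto
      show "A_mat N \<gamma> s u $$ (i,j) = (minv (W u) * W s) $$ (i,j)"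
        using B00[OF s u su] lower_triD[OF Bl[OF s u] Bc[OF s u]] i j unfolding A_mat_idx[OF i j] \<gamma>_def
        by (auto simp del: index_mult_mat)
    qed (use Bc[OF s u] in \<open>auto simp: A_mat_def\<close>)
    then show ?thesis using minv_minv[OF Wc[OF s] Wd[OF s]] by simp
  qed
  have fam2: "nonsing_lt_family N I (\<lambda>t. minv (W t))"
    unfolding nonsing_lt_family_def using Wic Wil minv_det[OF Wc Wd] by auto
  show ?thesis
    unfolding MPR_def structural_matrix_def using mk tli msc pr fam2 Aeq by blast
qed

lemma mart_const:
  assumes std: "standing M I X"
  shows "martingale M I X (\<lambda>t \<omega>. 1)"
proof -
  interpret prob_space M using std_prob[OF std] .
  show ?thesis unfolding martingale_def using ce_const[OF std] by auto
qed

theorem theorem1: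
  fixes N :: nat and M :: "'a measure" and I :: "real set" and X :: "real \<Rightarrow> 'a \<Rightarrow> real"
  assumes "N \<ge> 1"
    and "standing M I X"
    and "markov M I X" and "TLI N M I X" and "MSC N M I X"
  shows
    "(MPR N M I X \<longleftrightarrow>
       (\<exists>c :: nat \<Rightarrow> nat \<Rightarrow> real \<Rightarrow> real.
          (\<forall>i\<in>{1..N}. \<forall>t\<in>I. c i i t \<noteq> 0) \<and>
          (\<forall>i\<in>{1..N}. martingale M I X (\<lambda>t \<omega>. \<Sum>k\<le>i. c i k t * X t \<omega> ^ k))))
  \<and>
    (\<forall>V. MPR N M I X \<longrightarrow> structural_matrix N M I X V \<longrightarrow>
       (\<forall>i\<le>N. martingale M I X (\<lambda>t \<omega>. (minv (V t) *\<^sub>v Xvec N X t \<omega>) $ i)))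
  \<and>
    (\<forall>W. nonsing_lt_family N I W \<longrightarrow>
     (\<forall>i\<le>N. martingale M I X (\<lambda>t \<omega>. (W t *\<^sub>v Xvec N X t \<omega>) $ i)) \<longrightarrow>
       (\<forall>s\<in>I. \<forall>t\<in>I. s \<le> t \<longrightarrow> (\<forall>i\<le>N. AE \<omega> in M.
          real_cond_exp M (past M I X s) (\<lambda>\<omega>. Xvec N X t \<omega> $ i) \<omega>
            = (minv (W t) * W s *\<^sub>v Xvec N X s \<omega>) $ i))
       \<and> MPR N M I X \<and> structural_matrix N M I X (\<lambda>t. minv (W t)))"
proof -
  note std = assms(2) and mk = assms(3) and tli = assms(4) and msc = assms(5)
  have P2: "\<forall>V. MPR N M I X \<longrightarrow> structural_matrix N M I X V \<longrightarrow>
       (\<forall>i\<le>N. martingale M I X (\<lambda>t \<omega>. (minv (V t) *\<^sub>v Xvec N X t \<omega>) $ i))"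
    using part2[OF std] by blast
  have P3: "\<forall>W. nonsing_lt_family N I W \<longrightarrow>
     (\<forall>i\<le>N. martingale M I X (\<lambda>t \<omega>. (W t *\<^sub>v Xvec N X t \<omega>) $ i)) \<longrightarrow>
       (\<forall>s\<in>I. \<forall>t\<in>I. s \<le> t \<longrightarrow> (\<forall>i\<le>N. AE \<omega> in M.
          real_cond_exp M (past M I X s) (\<lambda>\<omega>. Xvec N X t \<omega> $ i) \<omega>
            = (minv (W t) * W s *\<^sub>v Xvec N X s \<omega>) $ i))
       \<and> MPR N M I X \<and> structural_matrix N M I X (\<lambda>t. minv (W t))"
    using part3_key[OF std] part3_full[OF std mk tli msc] by blast
  have P1a: "\<exists>c :: nat \<Rightarrow> nat \<Rightarrow> real \<Rightarrow> real.
          (\<forall>i\<in>{1..N}. \<forall>t\<in>I. c i i t \<noteq> 0) \<and>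
          (\<forall>i\<in>{1..N}. martingale M I X (\<lambda>t \<omega>. \<Sum>k\<le>i. c i k t * X t \<omega> ^ k))"
    if mpr: "MPR N M I X"
  proof -
    from mpr obtain \<gamma> where pr: "poly_reg N M I X \<gamma>" unfolding MPR_def by blast
    from exists_structural[OF std pr tli] obtain V where sm: "structural_matrix N M I X V" by blast
    have Vc: "V t \<in> carrier_mat (N+1) (N+1)" and Vd: "det (V t) \<noteq> 0" and Vl: "lower_tri (V t)" if "t \<in> I" for t
      using sm that unfolding structural_matrix_def nonsing_lt_family_def by auto
    have Vic: "minv (V u) \<in> carrier_mat (N+1) (N+1)" if "u \<in> I" for u by (rule minv_props(1)[OF Vc[OF that] Vd[OF that]])
    have Vil: "lower_tri (minv (V u))" if "u \<in> I" for u by (rule lower_tri_minv[OF Vc[OF that] Vl[OF that] Vd[OF that]])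
    have Vid: "det (minv (V u)) \<noteq> 0" if "u \<in> I" for u by (rule minv_det[OF Vc[OF that] Vd[OF that]])
    define c where "c i k t = minv (V t) $$ (i,k)" for i k t
    show ?thesis
    proof (intro exI[of _ c] conjI ballI)
      fix i t assume i: "i \<in> {1..N}" and t: "t \<in> I"
      show "c i i t \<noteq> 0" unfolding c_def by (rule lower_tri_diag_nz[OF Vic[OF t] Vil[OF t] Vid[OF t]]) (use i in auto)
    next
      fix i assume i: "i \<in> {1..N}"
      show "martingale M I X (\<lambda>t \<omega>. \<Sum>k\<le>i. c i k t * X t \<omega> ^ k)"
      proof (rule martingale_cong[OF part2[OF std sm]])
        show "i \<le> N" using i by auto
        fix t \<omega> assume t: "t \<in> I"
        have "(minv (V t) *\<^sub>v Xvec N X t \<omega>) $ i = (\<Sum>k<N+1. minv (V t) $$ (i,k) * X t \<omega> ^ k)"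
          by (rule mvX_idx[OF Vic[OF t]]) (use i in auto)
        also have "\<dots> = (\<Sum>k\<le>i. minv (V t) $$ (i,k) * X t \<omega> ^ k)"
          by (rule sum_trunc) (use i lower_triD[OF Vil[OF t] Vic[OF t]] in auto)
        finally show "(minv (V t) *\<^sub>v Xvec N X t \<omega>) $ i = (\<Sum>k\<le>i. c i k t * X t \<omega> ^ k)"
          by (simp add: c_def)
      qed
    qed
  qed
  have P1b: "MPR N M I X"
    if c1: "\<forall>i\<in>{1..N}. \<forall>t\<in>I. c i i t \<noteq> 0"
      and c2: "\<forall>i\<in>{1..N}. martingale M I X (\<lambda>t \<omega>. \<Sum>k\<le>i. c i k t * X t \<omega> ^ k)"
    for c :: "nat \<Rightarrow> nat \<Rightarrow> real \<Rightarrow> real"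
  proof -
    define W where "W t = mat (N+1) (N+1) (\<lambda>(i,k). if i = 0 then (if k = 0 then 1 else 0) else if k \<le> i then c i k t else 0)" for t
    have Wc: "W t \<in> carrier_mat (N+1) (N+1)" for t by (simp add: W_def)
    have Wl: "lower_tri (W t)" for t by (auto simp: W_def lower_tri_def)
    have fam: "nonsing_lt_family N I W"
      unfolding nonsing_lt_family_def
    proof (intro ballI conjI)
      fix t assume t: "t \<in> I"
      show "W t \<in> carrier_mat (N+1) (N+1)" "lower_tri (W t)" by (rule Wc, rule Wl)
      have "det (W t) = (\<Prod>i<N+1. W t $$ (i,i))" by (rule lower_tri_det[OF Wc Wl])
      also have "\<dots> \<noteq> 0"
      proof -
        have "W t $$ (i,i) \<noteq> 0" if "i < N+1" for i
          using that c1 t by (cases "i = 0") (auto simp: W_def)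
        then show ?thesis by simp
      qed
      finally show "det (W t) \<noteq> 0" .
    qed
    have mart: "\<forall>i\<le>N. martingale M I X (\<lambda>t \<omega>. (W t *\<^sub>v Xvec N X t \<omega>) $ i)"
    proof (intro allI impI)
      fix i assume i: "i \<le> N"
      have row: "(W t *\<^sub>v Xvec N X t \<omega>) $ i = (\<Sum>k\<le>i. W t $$ (i,k) * X t \<omega> ^ k)" for t \<omega>
      proof -
        have "(W t *\<^sub>v Xvec N X t \<omega>) $ i = (\<Sum>k<N+1. W t $$ (i,k) * X t \<omega> ^ k)"
          by (rule mvX_idx[OF Wc]) (use i in auto)
        also have "\<dots> = (\<Sum>k\<le>i. W t $$ (i,k) * X t \<omega> ^ k)"
          by (rule sum_trunc) (use i lower_triD[OF Wl Wc] in auto)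
        finally show ?thesis .
      qed
      show "martingale M I X (\<lambda>t \<omega>. (W t *\<^sub>v Xvec N X t \<omega>) $ i)"
      proof (cases "i = 0")
        case True
        show ?thesis
        proof (rule martingale_cong[OF mart_const[OF std]])
          fix t \<omega>
          show "1 = (W t *\<^sub>v Xvec N X t \<omega>) $ i" by (subst row) (simp add: True W_def)
        qed
      next
        case False
        show ?thesis
        proof (rule martingale_cong[OF c2[rule_format, of i]])
          show "i \<in> {1..N}" using i False by auto
          fix t \<omega>
          show "(\<Sum>k\<le>i. c i k t * X t \<omega> ^ k) = (W t *\<^sub>v Xvec N X t \<omega>) $ i"
            unfolding row using i False by (auto simp: W_def intro!: sum.cong)
        qed
      qed
    qed
    show ?thesis using part3_full[OF std mk tli msc fam mart] by blast
  qed
  show ?thesis using P1a P1b P2 P3 by blast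
qed

end
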